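(* In the setting of the context, suppose Assumption (A) holds with data $(g,n,m,d)$. Then there exist $a_1,a_2\in\mathbb R_+$ such that for all $z\in\mathsf Z$: (1) $|v^*(z)|\le\sum_{t=0}^{n-1}\beta^t\mathbb E_z[|r(Z_t)|+|c(Z_t)|]+a_1g(z)+a_2$; (2) $|\psi^*(z)|\le\sum_{t=1}^{n-1}\beta^t\mathbb E_z|r(Z_t)|+\sum_{t=0}^{n-1}\beta^t\mathbb E_z|c(Z_t)|+a_1g(z)+a_2$.
   Context: $P$ is a stochastic kernel on a measurable space $(\mathsf Z,\mathscr Z)$, $P^0(z,\cdot)=\delta_z$, $P^n(z,B)=\int P(z',B)P^{n-1}(z,dz')$; $(Z_t)$ is a time-homogeneous Markov process with kernel $P$ adapted to a filtration; $\mathbb E_zh(Z_t)=\int h\,dP^t(z,\cdot)$. $\beta\in(0,1)$; $r,c:\mathsf Z\to\mathbb R$ measurable. $v^*(z)=\sup_\tau\mathbb E_z\{\sum_{t=0}^{\tau-1}\beta^tc(Z_t)+\beta^\tau r(Z_\tau)\}$ over a.s. finite $\mathbb N_0$-valued stopping times, $\psi^*(z)=c(z)+\beta\int v^*(z')P(z,dz')$. Assumption (A): there exist measurable $g:\mathsf Z\to\mathbb R_+$, $n\in\mathbb N_0$, $m,d\ge0$ with $\beta m<1$ such that $\max\{\int|r|dP^n(z,\cdot),\int|c|dP^n(z,\cdot)\}\le g(z)$ and $\int g(z')P(z,dz')\le mg(z)+d$ for all $z$. *)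

theory Defs
  imports "HOL-Probability.Probability"
begin

primrec kpow :: "'z measure \<Rightarrow> ('z \<Rightarrow> 'z measure) \<Rightarrow> nat \<Rightarrow> 'z \<Rightarrow> 'z measure" where
  "kpow Zm P 0 z = return Zm z"
| "kpow Zm P (Suc n) z = bind (kpow Zm P n z) P"

definition eexp :: "'a measure \<Rightarrow> ('a \<Rightarrow> real) \<Rightarrow> ereal" where
  "eexp M f = enn2ereal (\<integral>\<^sup>+ x. ennreal (f x) \<partial>M) - enn2ereal (\<integral>\<^sup>+ x. ennreal (- f x) \<partial>M)"

definition eint :: "'a measure \<Rightarrow> ('a \<Rightarrow> ereal) \<Rightarrow> ereal" where
  "eint M f = enn2ereal (\<integral>\<^sup>+ x. e2ennreal (f x) \<partial>M) - enn2ereal (\<integral>\<^sup>+ x. e2ennreal (- f x) \<partial>M)"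

definition vstar :: "('z \<Rightarrow> 'w measure) \<Rightarrow> (nat \<Rightarrow> 'w measure) \<Rightarrow> (nat \<Rightarrow> 'w \<Rightarrow> 'z)
    \<Rightarrow> real \<Rightarrow> ('z \<Rightarrow> real) \<Rightarrow> ('z \<Rightarrow> real) \<Rightarrow> 'z \<Rightarrow> ereal" where
  "vstar M F Z \<beta> r c z = (SUP \<tau> \<in> {\<tau>. stopping_time F \<tau>}.
      eexp (M z) (\<lambda>\<omega>. (\<Sum>t<\<tau> \<omega>. \<beta> ^ t * c (Z t \<omega>)) + \<beta> ^ (\<tau> \<omega>) * r (Z (\<tau> \<omega>) \<omega>)))"

definition psistar :: "('z \<Rightarrow> 'z measure) \<Rightarrow> ('z \<Rightarrow> 'w measure) \<Rightarrow> (nat \<Rightarrow> 'w measure)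
    \<Rightarrow> (nat \<Rightarrow> 'w \<Rightarrow> 'z) \<Rightarrow> real \<Rightarrow> ('z \<Rightarrow> real) \<Rightarrow> ('z \<Rightarrow> real) \<Rightarrow> 'z \<Rightarrow> ereal" where
  "psistar P M F Z \<beta> r c z = ereal (c z) + ereal \<beta> * eint (P z) (vstar M F Z \<beta> r c)"

end

theory Submission
  imports Defs
begin


lemma kpow_meas:
  assumes P: "P \<in> Zm \<rightarrow>\<^sub>M prob_algebra Zm"
  shows "kpow Zm P t \<in> Zm \<rightarrow>\<^sub>M prob_algebra Zm"
proof (induction t)
  case 0
  have "kpow Zm P 0 = return Zm" by (rule ext) simp
  then show ?case by simp
next
  case (Suc t)
  have "kpow Zm P (Suc t) = (\<lambda>z. bind (kpow Zm P t z) P)" by (rule ext) simp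
  then show ?case using measurable_bind_prob_space[OF Suc P] by simp
qed

lemma kpow_space:
  assumes P: "P \<in> Zm \<rightarrow>\<^sub>M prob_algebra Zm" and z: "z \<in> space Zm"
  shows "kpow Zm P t z \<in> space (prob_algebra Zm)"
  using measurable_space[OF kpow_meas[OF P] z] .

lemma kpow_sets:
  assumes P: "P \<in> Zm \<rightarrow>\<^sub>M prob_algebra Zm" and z: "z \<in> space Zm"
  shows "sets (kpow Zm P t z) = sets Zm" "prob_space (kpow Zm P t z)"
    "space (kpow Zm P t z) = space Zm"
proof -
  show 1: "sets (kpow Zm P t z) = sets Zm" "prob_space (kpow Zm P t z)"
    using kpow_space[OF P z, of t] by (auto simp: space_prob_algebra)
  show "space (kpow Zm P t z) = space Zm" using sets_eq_imp_space_eq[OF 1(1)] .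
qed

lemma kpow_bind_int:
  assumes P: "P \<in> Zm \<rightarrow>\<^sub>M prob_algebra Zm" and z: "z \<in> space Zm"
    and f: "f \<in> borel_measurable Zm"
  shows "(\<integral>\<^sup>+x. f x \<partial>kpow Zm P (Suc t) z) = (\<integral>\<^sup>+x. (\<integral>\<^sup>+y. f y \<partial>P x) \<partial>kpow Zm P t z)"
proof -
  have "P \<in> kpow Zm P t z \<rightarrow>\<^sub>M subprob_algebra Zm"
    using measurable_prob_algebraD[OF P] by (simp add: measurable_cong_sets[OF kpow_sets(1)[OF P z] refl])
  from nn_integral_bind[OF f this] show ?thesis by simp
qed

lemma kpow_borel:
  assumes P: "P \<in> Zm \<rightarrow>\<^sub>M prob_algebra Zm" and z: "z \<in> space Zm"
    and f: "f \<in> Zm \<rightarrow>\<^sub>M N"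
  shows "f \<in> kpow Zm P t z \<rightarrow>\<^sub>M N"
  using f by (simp add: measurable_cong_sets[OF kpow_sets(1)[OF P z] refl])

lemma kpow_integral:
  assumes P: "P \<in> Zm \<rightarrow>\<^sub>M prob_algebra Zm" and z: "z \<in> space Zm"
    and f: "f \<in> borel_measurable Zm"
  shows "(\<integral>\<^sup>+x. f x \<partial>kpow Zm P (n + k) z) = (\<integral>\<^sup>+y. (\<integral>\<^sup>+x. f x \<partial>kpow Zm P n y) \<partial>kpow Zm P k z)"
  using f
proof (induction n arbitrary: f)
  case 0
  show ?case
    by (simp, rule nn_integral_cong) (simp add: nn_integral_return kpow_sets[OF P z] 0)
next
  case (Suc n)
  have m: "(\<lambda>x. \<integral>\<^sup>+y. f y \<partial>P x) \<in> borel_measurable Zm"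
    using Suc.prems measurable_prob_algebraD[OF P] by measurable
  have "(\<integral>\<^sup>+x. f x \<partial>kpow Zm P (Suc n + k) z) = (\<integral>\<^sup>+x. (\<integral>\<^sup>+y. f y \<partial>P x) \<partial>kpow Zm P (n + k) z)"
    using kpow_bind_int[OF P _ Suc.prems] z kpow_sets[OF P] by simp
  also have "\<dots> = (\<integral>\<^sup>+y. (\<integral>\<^sup>+x. (\<integral>\<^sup>+w. f w \<partial>P x) \<partial>kpow Zm P n y) \<partial>kpow Zm P k z)"
    by (rule Suc.IH[OF m])
  also have "\<dots> = (\<integral>\<^sup>+y. (\<integral>\<^sup>+x. f x \<partial>kpow Zm P (Suc n) y) \<partial>kpow Zm P k z)"
    by (rule nn_integral_cong) (use kpow_bind_int[OF P _ Suc.prems] z kpow_sets[OF P] in simp)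
  finally show ?case .
qed

lemma kpow_one:
  assumes P: "P \<in> Zm \<rightarrow>\<^sub>M prob_algebra Zm" and z: "z \<in> space Zm"
  shows "kpow Zm P 1 z = P z"
  using bind_return[OF measurable_prob_algebraD[OF P] z] by simp

locale setting =
  fixes Zm :: "'z measure" and P :: "'z \<Rightarrow> 'z measure"
    and Om :: "'w measure" and M :: "'z \<Rightarrow> 'w measure" and F :: "nat \<Rightarrow> 'w measure"
    and Z :: "nat \<Rightarrow> 'w \<Rightarrow> 'z"
  assumes P_kernel: "P \<in> Zm \<rightarrow>\<^sub>M prob_algebra Zm"
    and M_prob: "\<And>z. z \<in> space Zm \<Longrightarrow> prob_space (M z)"
    and M_sets: "\<And>z. z \<in> space Zm \<Longrightarrow> sets (M z) = sets Om"
    and filt: "filtration (space Om) F"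
    and F_sub: "\<And>t. sets (F t) \<subseteq> sets Om"
    and adapted: "\<And>t. Z t \<in> F t \<rightarrow>\<^sub>M Zm"
    and start: "\<And>z. z \<in> space Zm \<Longrightarrow> (AE \<omega> in M z. Z 0 \<omega> = z)"
    and markov: "\<And>z t A B. z \<in> space Zm \<Longrightarrow> A \<in> sets (F t) \<Longrightarrow> B \<in> sets Zm \<Longrightarrow>
        emeasure (M z) (A \<inter> (Z (Suc t) -` B \<inter> space Om))
          = (\<integral>\<^sup>+ \<omega>. emeasure (P (Z t \<omega>)) B * indicator A \<omega> \<partial>M z)"
begin

lemma space_M: "z \<in> space Zm \<Longrightarrow> space (M z) = space Om"
  using sets_eq_imp_space_eq[OF M_sets] .

lemma space_F: "space (F t) = space Om"
  using filt by (simp add: filtration_def)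

lemma Zmeas: assumes z: "z \<in> space Zm" shows "Z t \<in> M z \<rightarrow>\<^sub>M Zm"
proof -
  have "Z t \<in> Om \<rightarrow>\<^sub>M Zm"
    using measurable_mono[of Zm Zm "F t" Om] F_sub[of t] space_F[of t] adapted[of t] by auto
  moreover have "(Om \<rightarrow>\<^sub>M Zm) = (M z \<rightarrow>\<^sub>M Zm)" by (rule measurable_cong_sets) (simp_all add: M_sets[OF z])
  ultimately show ?thesis by simp
qed

lemma distrZ: assumes z: "z \<in> space Zm" shows "distr (M z) Zm (Z t) = kpow Zm P t z"
proof (induction t)
  case 0
  show ?case
  proof (rule measure_eqI)
    show "sets (distr (M z) Zm (Z 0)) = sets (kpow Zm P 0 z)" by simp
  next
    fix A assume A: "A \<in> sets (distr (M z) Zm (Z 0))"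
    interpret prob_space "M z" using M_prob[OF z] .
    have "emeasure (distr (M z) Zm (Z 0)) A = emeasure (M z) (Z 0 -` A \<inter> space (M z))"
      using A Zmeas[OF z] by (simp add: emeasure_distr)
    also have "\<dots> = (\<integral>\<^sup>+\<omega>. indicator (Z 0 -` A \<inter> space (M z)) \<omega> \<partial>M z)"
      using A Zmeas[OF z, of 0] by (simp add: measurable_sets)
    also have "\<dots> = (\<integral>\<^sup>+\<omega>. indicator A z \<partial>M z)"
      by (rule nn_integral_cong_AE) (use start[OF z] in \<open>auto simp: indicator_def\<close>)
    also have "\<dots> = indicator A z" by (simp add: emeasure_space_1)
    also have "\<dots> = emeasure (kpow Zm P 0 z) A" using A by simp
    finally show "emeasure (distr (M z) Zm (Z 0)) A = emeasure (kpow Zm P 0 z) A" .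
  qed
next
  case (Suc t)
  show ?case
  proof (rule measure_eqI)
    show "sets (distr (M z) Zm (Z (Suc t))) = sets (kpow Zm P (Suc t) z)"
      using kpow_sets(1)[OF P_kernel z, of "Suc t"] by simp
  next
    fix B assume B: "B \<in> sets (distr (M z) Zm (Z (Suc t)))"
    then have B': "B \<in> sets Zm" by simp
    have sp: "space Om \<in> sets (F t)" using sets.top[of "F t"] space_F[of t] by simp
    have "emeasure (distr (M z) Zm (Z (Suc t))) B = emeasure (M z) (space Om \<inter> (Z (Suc t) -` B \<inter> space Om))"
      using B Zmeas[OF z] space_M[OF z] by (simp add: emeasure_distr Int_absorb1 Int_commute)
    also have "\<dots> = (\<integral>\<^sup>+ \<omega>. emeasure (P (Z t \<omega>)) B * indicator (space Om) \<omega> \<partial>M z)"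
      by (rule markov[OF z sp B'])
    also have "\<dots> = (\<integral>\<^sup>+ \<omega>. emeasure (P (Z t \<omega>)) B \<partial>M z)"
      by (rule nn_integral_cong) (simp add: space_M[OF z])
    also have "\<dots> = (\<integral>\<^sup>+ x. emeasure (P x) B \<partial>distr (M z) Zm (Z t))"
      using B' measurable_prob_algebraD[OF P_kernel] Zmeas[OF z]
      by (subst nn_integral_distr) (auto intro: measurable_emeasure_kernel)
    also have "\<dots> = emeasure (kpow Zm P (Suc t) z) B"
      using Suc B' by (simp add: emeasure_bind_prob_algebra[OF kpow_space[OF P_kernel z] P_kernel])
    finally show "emeasure (distr (M z) Zm (Z (Suc t))) B = emeasure (kpow Zm P (Suc t) z) B" .
  qed
qed

lemma EZ: assumes z: "z \<in> space Zm" and h: "h \<in> borel_measurable Zm"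
  shows "(\<integral>\<^sup>+\<omega>. h (Z t \<omega>) \<partial>M z) = (\<integral>\<^sup>+x. h x \<partial>kpow Zm P t z)"
proof -
  have h': "h \<in> borel_measurable (distr (M z) Zm (Z t))"
    using h by (simp add: measurable_cong_sets[OF sets_distr refl])
  show ?thesis using nn_integral_distr[OF Zmeas[OF z] h'] distrZ[OF z] by simp
qed

end


lemma reward_le:
  fixes b :: real and x y :: "nat \<Rightarrow> real"
  assumes "0 < b"
  shows "(\<Sum>t<T. b ^ t * x t) + b ^ T * y T \<le> (\<Sum>t<Suc T. b ^ t * (\<bar>y t\<bar> + \<bar>x t\<bar>))"
proof -
  have "(\<Sum>t<T. b ^ t * x t) \<le> (\<Sum>t<T. b ^ t * (\<bar>y t\<bar> + \<bar>x t\<bar>))"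
    by (rule sum_mono) (use assms in \<open>auto intro!: mult_left_mono\<close>)
  moreover have "b ^ T * y T \<le> b ^ T * (\<bar>y T\<bar> + \<bar>x T\<bar>)"
    by (rule mult_left_mono) (use assms in auto)
  ultimately show ?thesis by simp
qed

lemma ereal_le_abs: "(x::ereal) \<le> \<bar>x\<bar>" "- x \<le> \<bar>x\<bar>"
  by (cases x; simp)+

lemma ereal_minus_le_self: "0 \<le> y \<Longrightarrow> x - y \<le> (x::ereal)"
  by (cases x; cases y) auto

lemma abs_diff_enn: "A \<le> T \<Longrightarrow> B \<le> T \<Longrightarrow> \<bar>enn2ereal A - enn2ereal B\<bar> \<le> enn2ereal T"
proof (cases "T = top")
  case False
  assume a: "A \<le> T" "B \<le> T"
  obtain t where t: "T = ennreal t" "0 \<le> t" using False by (cases T) auto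
  have "A \<noteq> top" "B \<noteq> top" using a False top_unique by auto
  then obtain a' b' where ab: "A = ennreal a'" "0 \<le> a'" "B = ennreal b'" "0 \<le> b'"
    by (metis ennreal_cases)
  have "a' \<le> t" "b' \<le> t" using a t ab by auto
  then show ?thesis using t ab by simp
qed simp

lemma ereal_psi:
  assumes b: "0 < b" and e: "\<bar>e\<bar> \<le> enn2ereal X"
  shows "\<bar>ereal cc + ereal b * e\<bar> \<le> enn2ereal (ennreal \<bar>cc\<bar> + ennreal b * X)"
proof (cases "X = top")
  case True
  then show ?thesis using b by (simp add: ennreal_mult_top)
next
  case False
  then obtain x where x: "X = ennreal x" "0 \<le> x" by (cases X) auto
  with e obtain y where y: "e = ereal y" "\<bar>y\<bar> \<le> x" by (cases e) auto
  have "\<bar>cc + b * y\<bar> \<le> \<bar>cc\<bar> + b * x"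
  proof -
    have "\<bar>b * y\<bar> \<le> b * x" using b y by (simp add: abs_mult mult_left_mono)
    then show ?thesis by linarith
  qed
  then show ?thesis using x y b by (simp add: ennreal_mult[symmetric] ennreal_plus[symmetric] del: ennreal_plus)
qed

lemma conv_sum: "0 \<le> b \<Longrightarrow> enn2ereal (\<Sum>t\<in>A. ennreal (b ^ t) * X t) = (\<Sum>t\<in>A. ereal (b ^ t) * enn2ereal (X t))"
  by (subst sum_enn2ereal[symmetric]) (auto simp: times_ennreal.rep_eq)

locale setting2 = setting +
  fixes \<beta> :: real and r c g :: "'z \<Rightarrow> real" and n :: nat and m d :: real
  assumes beta: "0 < \<beta>" "\<beta> < 1"
    and r_meas: "r \<in> borel_measurable Zm" and c_meas: "c \<in> borel_measurable Zm"
    and g_meas: "g \<in> borel_measurable Zm" and g_nonneg: "\<And>z. z \<in> space Zm \<Longrightarrow> 0 \<le> g z"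
    and m_nonneg: "0 \<le> m" and d_nonneg: "0 \<le> d" and bm: "\<beta> * m < 1"
    and A_r: "\<And>z. z \<in> space Zm \<Longrightarrow> (\<integral>\<^sup>+ z'. ennreal \<bar>r z'\<bar> \<partial>kpow Zm P n z) \<le> ennreal (g z)"
    and A_c: "\<And>z. z \<in> space Zm \<Longrightarrow> (\<integral>\<^sup>+ z'. ennreal \<bar>c z'\<bar> \<partial>kpow Zm P n z) \<le> ennreal (g z)"
    and A_g: "\<And>z. z \<in> space Zm \<Longrightarrow> (\<integral>\<^sup>+ z'. ennreal (g z') \<partial>P z) \<le> ennreal (m * g z + d)"
begin

definition "\<rho> = (max m 1 + 1 / \<beta>) / 2"
definition "D = d / (\<rho> - 1)"
definition "a1 = 2 / (1 - \<beta> * \<rho>)"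
definition "a2 = a1 * D"

lemma rho_props: "m \<le> \<rho>" "1 < \<rho>" "\<beta> * \<rho> < 1" "0 \<le> D" "d + D = \<rho> * D"
  "0 \<le> a1" "0 \<le> a2" "2 \<le> a1 * (1 - \<beta> * m)" "\<beta> * (a1 * d + a2) \<le> a2"
proof -
  have mb: "m < 1 / \<beta>" using bm beta by (simp add: field_simps)
  have ob: "1 < 1 / \<beta>" using beta by simp
  show m: "m \<le> \<rho>" and r1: "1 < \<rho>" using mb ob unfolding \<rho>_def by auto
  have "\<beta> * \<rho> = (\<beta> * max m 1 + 1) / 2" unfolding \<rho>_def using beta by (simp add: field_simps)
  moreover have "\<beta> * max m 1 < 1" using bm beta by (auto simp: max_def)
  ultimately show br: "\<beta> * \<rho> < 1" by simp
  show D0: "0 \<le> D" unfolding D_def using d_nonneg r1 by simp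
  show "d + D = \<rho> * D" unfolding D_def using r1 by (simp add: field_simps)
  show a10: "0 \<le> a1" unfolding a1_def using br by simp
  then show "0 \<le> a2" unfolding a2_def using D0 by simp
  have "1 - \<beta> * \<rho> \<le> 1 - \<beta> * m" using m beta by (simp add: mult_left_mono)
  then show "2 \<le> a1 * (1 - \<beta> * m)" unfolding a1_def using br
    by (simp add: field_simps)
  have "\<beta> * d \<le> (1 - \<beta>) * D"
  proof -
    have "\<beta> * d = \<beta> * ((\<rho> - 1) * D)" unfolding D_def using r1 by simp
    also have "\<dots> \<le> (1 - \<beta>) * D"
    proof -
      have "(\<beta> * \<rho>) * D \<le> 1 * D" using br D0 by (intro mult_right_mono) auto
      then show ?thesis by (simp add: algebra_simps)
    qed
    finally show ?thesis .
  qed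
  then have "a1 * (\<beta> * d) \<le> a1 * ((1 - \<beta>) * D)" using a10 by (rule mult_left_mono)
  then have "\<beta> * (a1 * d + a2) \<le> a2" unfolding a2_def by (simp add: algebra_simps)
  then show "\<beta> * (a1 * d + a2) \<le> a2" .
qed


lemma Gbound: assumes z: "z \<in> space Zm"
  shows "(\<integral>\<^sup>+x. ennreal (g x) \<partial>kpow Zm P k z) + ennreal D \<le> ennreal (\<rho> ^ k * (g z + D))"
proof (induction k)
  case 0
  show ?case using z g_meas g_nonneg[OF z] rho_props(4)
    by (simp add: nn_integral_return ennreal_plus[symmetric] del: ennreal_plus)
next
  case (Suc k)
  let ?G = "\<integral>\<^sup>+x. ennreal (g x) \<partial>kpow Zm P k z"
  interpret K: prob_space "kpow Zm P k z" using kpow_sets(2)[OF P_kernel z] .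
  have "(\<integral>\<^sup>+x. ennreal (g x) \<partial>kpow Zm P (Suc k) z) = (\<integral>\<^sup>+x. (\<integral>\<^sup>+y. ennreal (g y) \<partial>P x) \<partial>kpow Zm P k z)"
    by (rule kpow_bind_int[OF P_kernel z]) (use g_meas in simp)
  also have "\<dots> \<le> (\<integral>\<^sup>+x. ennreal m * ennreal (g x) + ennreal d \<partial>kpow Zm P k z)"
  proof (rule nn_integral_mono)
    fix x assume "x \<in> space (kpow Zm P k z)"
    then have x: "x \<in> space Zm" using kpow_sets(3)[OF P_kernel z] by simp
    have "ennreal (m * g x + d) = ennreal m * ennreal (g x) + ennreal d"
      using g_nonneg[OF x] m_nonneg d_nonneg by (simp add: ennreal_plus ennreal_mult)
    then show "(\<integral>\<^sup>+y. ennreal (g y) \<partial>P x) \<le> ennreal m * ennreal (g x) + ennreal d"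
      using A_g[OF x] by simp
  qed
  also have "\<dots> = ennreal m * ?G + ennreal d"
  proof -
    have gm: "(\<lambda>x. ennreal (g x)) \<in> borel_measurable (kpow Zm P k z)"
      by (rule kpow_borel[OF P_kernel z]) (use g_meas in measurable)
    then have gm2: "(\<lambda>x. ennreal m * ennreal (g x)) \<in> borel_measurable (kpow Zm P k z)" by measurable
    show ?thesis using K.emeasure_space_1
      by (simp add: nn_integral_add[OF gm2] nn_integral_cmult[OF gm])
  qed
  finally have 1: "(\<integral>\<^sup>+x. ennreal (g x) \<partial>kpow Zm P (Suc k) z) + ennreal D \<le> ennreal m * ?G + ennreal d + ennreal D"
    by (rule add_right_mono)
  also have "\<dots> \<le> ennreal \<rho> * ?G + ennreal (\<rho> * D)"
  proof -
    have "ennreal m * ?G \<le> ennreal \<rho> * ?G" using rho_props(1) by (intro mult_right_mono ennreal_leI) auto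
    moreover have "ennreal d + ennreal D = ennreal (\<rho> * D)"
      using rho_props(5) d_nonneg rho_props(4) by (simp add: ennreal_plus[symmetric] del: ennreal_plus)
    ultimately show ?thesis by (simp add: add.assoc add_right_mono)
  qed
  also have "\<dots> = ennreal \<rho> * (?G + ennreal D)"
    using rho_props(2) rho_props(4) by (simp add: distrib_left ennreal_mult)
  also have "\<dots> \<le> ennreal \<rho> * ennreal (\<rho> ^ k * (g z + D))"
    by (rule mult_left_mono[OF Suc]) simp
  also have "\<dots> = ennreal (\<rho> ^ Suc k * (g z + D))"
  proof -
    have "0 \<le> \<rho> ^ k * (g z + D)" using rho_props(2,4) g_nonneg[OF z] by simp
    then show ?thesis using rho_props(2) by (simp add: ennreal_mult[symmetric] mult.assoc)
  qed
  finally show ?case .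
qed

lemma Tail: assumes z: "z \<in> space Zm"
  shows "(\<integral>\<^sup>+x. ennreal (\<bar>r x\<bar> + \<bar>c x\<bar>) \<partial>kpow Zm P (n + k) z) \<le> 2 * ennreal (\<rho> ^ k * (g z + D))"
proof -
  have gk: "(\<integral>\<^sup>+x. ennreal (g x) \<partial>kpow Zm P k z) \<le> ennreal (\<rho> ^ k * (g z + D))"
  proof -
    have "(\<integral>\<^sup>+x. ennreal (g x) \<partial>kpow Zm P k z) \<le> (\<integral>\<^sup>+x. ennreal (g x) \<partial>kpow Zm P k z) + ennreal D"
      by simp
    then show ?thesis using Gbound[OF z, of k] by (rule order.trans)
  qed
  have one: "(\<integral>\<^sup>+x. ennreal \<bar>h x\<bar> \<partial>kpow Zm P (n + k) z) \<le> ennreal (\<rho> ^ k * (g z + D))"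
    if h: "h \<in> borel_measurable Zm" and Ah: "\<And>z. z \<in> space Zm \<Longrightarrow> (\<integral>\<^sup>+ z'. ennreal \<bar>h z'\<bar> \<partial>kpow Zm P n z) \<le> ennreal (g z)" for h
  proof -
    have "(\<integral>\<^sup>+x. ennreal \<bar>h x\<bar> \<partial>kpow Zm P (n + k) z) = (\<integral>\<^sup>+y. (\<integral>\<^sup>+x. ennreal \<bar>h x\<bar> \<partial>kpow Zm P n y) \<partial>kpow Zm P k z)"
      by (rule kpow_integral[OF P_kernel z]) (use h in simp)
    also have "\<dots> \<le> (\<integral>\<^sup>+y. ennreal (g y) \<partial>kpow Zm P k z)"
      by (rule nn_integral_mono) (use Ah kpow_sets(3)[OF P_kernel z] in auto)
    finally show ?thesis using gk by (rule order.trans)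
  qed
  have "(\<integral>\<^sup>+x. ennreal (\<bar>r x\<bar> + \<bar>c x\<bar>) \<partial>kpow Zm P (n + k) z)
     = (\<integral>\<^sup>+x. ennreal \<bar>r x\<bar> \<partial>kpow Zm P (n + k) z) + (\<integral>\<^sup>+x. ennreal \<bar>c x\<bar> \<partial>kpow Zm P (n + k) z)"
  proof -
    have rm: "(\<lambda>x. ennreal \<bar>r x\<bar>) \<in> borel_measurable (kpow Zm P (n + k) z)"
      by (rule kpow_borel[OF P_kernel z]) (use r_meas in simp)
    have cm: "(\<lambda>x. ennreal \<bar>c x\<bar>) \<in> borel_measurable (kpow Zm P (n + k) z)"
      by (rule kpow_borel[OF P_kernel z]) (use c_meas in simp)
    show ?thesis by (simp add: nn_integral_add[OF rm cm, symmetric] ennreal_plus)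
  qed
  also have "\<dots> \<le> ennreal (\<rho> ^ k * (g z + D)) + ennreal (\<rho> ^ k * (g z + D))"
    by (intro add_mono; rule one) (use r_meas c_meas A_r A_c in auto)
  finally show ?thesis by (metis mult_2)
qed


definition "I t z = (\<integral>\<^sup>+\<omega>. ennreal (\<bar>r (Z t \<omega>)\<bar> + \<bar>c (Z t \<omega>)\<bar>) \<partial>M z)"
definition "S z = (\<Sum>t. ennreal (\<beta> ^ t) * I t z)"
definition "Sfin z = (\<Sum>t<n. ennreal (\<beta> ^ t) * I t z)"

lemma hmeas: "(\<lambda>x. ennreal (\<bar>r x\<bar> + \<bar>c x\<bar>)) \<in> borel_measurable Zm"
  using r_meas c_meas by measurable

lemma I_kpow: "z \<in> space Zm \<Longrightarrow> I t z = (\<integral>\<^sup>+x. ennreal (\<bar>r x\<bar> + \<bar>c x\<bar>) \<partial>kpow Zm P t z)"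
  unfolding I_def by (rule EZ[OF _ hmeas])

lemma Sbound: assumes z: "z \<in> space Zm"
  shows "S z \<le> Sfin z + ennreal (a1 * g z + a2)"
proof -
  let ?f = "\<lambda>t. ennreal (\<beta> ^ t) * I t z"
  let ?C = "2 * (g z + D)"
  have g0: "0 \<le> g z" using g_nonneg[OF z] .
  have S: "S z = (\<Sum>k. ?f (k + n)) + Sfin z"
    unfolding S_def Sfin_def by (rule suminf_offset) simp
  have fk: "?f (k + n) \<le> ennreal (?C * (\<beta> * \<rho>) ^ k)" for k
  proof -
    have "?f (k + n) \<le> ennreal (\<beta> ^ (k + n)) * (2 * ennreal (\<rho> ^ k * (g z + D)))"
      using Tail[OF z, of k] I_kpow[OF z, of "k + n"] by (intro mult_left_mono) (auto simp: add.commute)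
    also have "\<dots> = ennreal (2 * \<beta> ^ (k + n) * (\<rho> ^ k * (g z + D)))"
      using beta rho_props(2,4) g0 by (simp add: ennreal_mult mult.assoc mult.left_commute)
    also have "\<dots> \<le> ennreal (?C * (\<beta> * \<rho>) ^ k)"
    proof (rule ennreal_leI)
      have "\<beta> ^ (k + n) \<le> \<beta> ^ k" using beta by (simp add: power_add mult_left_le power_le_one)
      then have "\<beta> ^ (k + n) * (\<rho> ^ k * (g z + D)) \<le> \<beta> ^ k * (\<rho> ^ k * (g z + D))"
        using rho_props(2,4) g0 by (intro mult_right_mono) auto
      then show "2 * \<beta> ^ (k + n) * (\<rho> ^ k * (g z + D)) \<le> ?C * (\<beta> * \<rho>) ^ k"
        by (simp add: power_mult_distrib algebra_simps)
    qed
    finally show ?thesis .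
  qed
  have br: "\<beta> * \<rho> < 1" "0 \<le> \<beta> * \<rho>" using rho_props(2,3) beta by auto
  have sums: "(\<lambda>k. ?C * (\<beta> * \<rho>) ^ k) sums (?C * (1 / (1 - \<beta> * \<rho>)))"
    by (rule sums_mult, rule geometric_sums) (use br in auto)
  have "(\<Sum>k. ?f (k + n)) \<le> (\<Sum>k. ennreal (?C * (\<beta> * \<rho>) ^ k))"
    by (rule suminf_le[OF fk]) auto
  also have "\<dots> = ennreal (?C * (1 / (1 - \<beta> * \<rho>)))"
    by (rule suminf_ennreal_eq[OF _ sums]) (use g0 rho_props(4) br in auto)
  also have "?C * (1 / (1 - \<beta> * \<rho>)) = a1 * g z + a2"
    unfolding a1_def a2_def by (simp add: add_divide_distrib algebra_simps)
  finally show ?thesis unfolding S by (simp add: add.commute add_left_mono)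
qed


lemma eexp_le: assumes z: "z \<in> space Zm"
  shows "eexp (M z) (\<lambda>\<omega>. (\<Sum>t<\<tau> \<omega>. \<beta> ^ t * c (Z t \<omega>)) + \<beta> ^ (\<tau> \<omega>) * r (Z (\<tau> \<omega>) \<omega>)) \<le> enn2ereal (S z)"
proof -
  let ?h = "\<lambda>t \<omega>. ennreal (\<beta> ^ t * (\<bar>r (Z t \<omega>)\<bar> + \<bar>c (Z t \<omega>)\<bar>))"
  have hm: "?h t \<in> borel_measurable (M z)" for t
    using Zmeas[OF z, of t] r_meas c_meas by measurable
  have "(\<integral>\<^sup>+\<omega>. ennreal ((\<Sum>t<\<tau> \<omega>. \<beta> ^ t * c (Z t \<omega>)) + \<beta> ^ (\<tau> \<omega>) * r (Z (\<tau> \<omega>) \<omega>)) \<partial>M z)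
      \<le> (\<integral>\<^sup>+\<omega>. (\<Sum>t. ?h t \<omega>) \<partial>M z)"
  proof (rule nn_integral_mono)
    fix \<omega>
    have "ennreal ((\<Sum>t<\<tau> \<omega>. \<beta> ^ t * c (Z t \<omega>)) + \<beta> ^ (\<tau> \<omega>) * r (Z (\<tau> \<omega>) \<omega>))
        \<le> ennreal (\<Sum>t<Suc (\<tau> \<omega>). \<beta> ^ t * (\<bar>r (Z t \<omega>)\<bar> + \<bar>c (Z t \<omega>)\<bar>))"
      by (rule ennreal_leI, rule reward_le[of \<beta> "\<lambda>t. c (Z t \<omega>)" "\<tau> \<omega>" "\<lambda>t. r (Z t \<omega>)"]) (use beta in simp)
    also have "\<dots> = (\<Sum>t<Suc (\<tau> \<omega>). ?h t \<omega>)"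
      by (rule sum_ennreal[symmetric]) (use beta in simp)
    also have "\<dots> \<le> (\<Sum>t. ?h t \<omega>)"
      by (rule sum_le_suminf[OF summableI]) auto
    finally show "ennreal ((\<Sum>t<\<tau> \<omega>. \<beta> ^ t * c (Z t \<omega>)) + \<beta> ^ (\<tau> \<omega>) * r (Z (\<tau> \<omega>) \<omega>))
        \<le> (\<Sum>t. ?h t \<omega>)" .
  qed
  also have "\<dots> = (\<Sum>t. \<integral>\<^sup>+\<omega>. ?h t \<omega> \<partial>M z)"
    by (rule nn_integral_suminf[OF hm])
  also have "\<dots> = S z"
    unfolding S_def I_def
  proof (rule suminf_cong)
    fix t
    have hm2: "(\<lambda>\<omega>. ennreal (\<bar>r (Z t \<omega>)\<bar> + \<bar>c (Z t \<omega>)\<bar>)) \<in> borel_measurable (M z)"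
      using Zmeas[OF z, of t] r_meas c_meas by measurable
    show "(\<integral>\<^sup>+\<omega>. ?h t \<omega> \<partial>M z) = ennreal (\<beta> ^ t) * (\<integral>\<^sup>+\<omega>. ennreal (\<bar>r (Z t \<omega>)\<bar> + \<bar>c (Z t \<omega>)\<bar>) \<partial>M z)"
    proof -
      have "(\<integral>\<^sup>+\<omega>. ?h t \<omega> \<partial>M z) = (\<integral>\<^sup>+\<omega>. ennreal (\<beta> ^ t) * ennreal (\<bar>r (Z t \<omega>)\<bar> + \<bar>c (Z t \<omega>)\<bar>) \<partial>M z)"
        by (rule nn_integral_cong) (use beta in \<open>simp add: ennreal_mult del: ennreal_plus\<close>)
      also have "\<dots> = ennreal (\<beta> ^ t) * (\<integral>\<^sup>+\<omega>. ennreal (\<bar>r (Z t \<omega>)\<bar> + \<bar>c (Z t \<omega>)\<bar>) \<partial>M z)"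
        by (rule nn_integral_cmult[OF hm2])
      finally show ?thesis .
    qed
  qed
  finally have A: "(\<integral>\<^sup>+\<omega>. ennreal ((\<Sum>t<\<tau> \<omega>. \<beta> ^ t * c (Z t \<omega>)) + \<beta> ^ (\<tau> \<omega>) * r (Z (\<tau> \<omega>) \<omega>)) \<partial>M z) \<le> S z" .
  show ?thesis unfolding eexp_def
  proof (rule order.trans[OF ereal_minus_le_self])
    show "0 \<le> enn2ereal (\<integral>\<^sup>+\<omega>. ennreal (- ((\<Sum>t<\<tau> \<omega>. \<beta> ^ t * c (Z t \<omega>)) + \<beta> ^ (\<tau> \<omega>) * r (Z (\<tau> \<omega>) \<omega>))) \<partial>M z)"
      by (rule enn2ereal_nonneg)
    show "enn2ereal (\<integral>\<^sup>+\<omega>. ennreal ((\<Sum>t<\<tau> \<omega>. \<beta> ^ t * c (Z t \<omega>)) + \<beta> ^ (\<tau> \<omega>) * r (Z (\<tau> \<omega>) \<omega>)) \<partial>M z) \<le> enn2ereal (S z)"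
      using A by (simp add: less_eq_ennreal.rep_eq)
  qed
qed


lemma int_Z0: assumes z: "z \<in> space Zm"
  shows "(\<integral>\<^sup>+\<omega>. ennreal (h (Z 0 \<omega>)) \<partial>M z) = ennreal (h z)"
proof -
  interpret prob_space "M z" using M_prob[OF z] .
  have "(\<integral>\<^sup>+\<omega>. ennreal (h (Z 0 \<omega>)) \<partial>M z) = (\<integral>\<^sup>+\<omega>. ennreal (h z) \<partial>M z)"
    by (rule nn_integral_cong_AE) (use start[OF z] in auto)
  also have "\<dots> = ennreal (h z)" by (simp add: emeasure_space_1)
  finally show ?thesis .
qed

lemma eexp0: assumes z: "z \<in> space Zm"
  shows "eexp (M z) (\<lambda>\<omega>. (\<Sum>t<(\<lambda>_. 0::nat) \<omega>. \<beta> ^ t * c (Z t \<omega>)) + \<beta> ^ ((\<lambda>_. 0::nat) \<omega>) * r (Z ((\<lambda>_. 0::nat) \<omega>) \<omega>)) = ereal (r z)"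
proof -
  have 1: "(\<integral>\<^sup>+\<omega>. ennreal (r (Z 0 \<omega>)) \<partial>M z) = ennreal (r z)"
    using int_Z0[OF z, of r] .
  have 2: "(\<integral>\<^sup>+\<omega>. ennreal (- r (Z 0 \<omega>)) \<partial>M z) = ennreal (- r z)"
    using int_Z0[OF z, of "\<lambda>x. - r x"] .
  show ?thesis unfolding eexp_def using 1 2
    by (cases "0 \<le> r z") (auto simp: ennreal_neg zero_ennreal.rep_eq)
qed

lemma r_le_S: assumes z: "z \<in> space Zm"
  shows "ereal \<bar>r z\<bar> \<le> enn2ereal (S z)"
proof -
  have "I 0 z = ennreal (\<bar>r z\<bar> + \<bar>c z\<bar>)"
    unfolding I_def using int_Z0[OF z, of "\<lambda>x. \<bar>r x\<bar> + \<bar>c x\<bar>"] by simp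
  then have "ennreal \<bar>r z\<bar> \<le> ennreal (\<beta> ^ 0) * I 0 z" by (simp add: ennreal_leI)
  also have "\<dots> \<le> S z" unfolding S_def
    using sum_le_suminf[OF summableI, of "{0}" "\<lambda>t. ennreal (\<beta> ^ t) * I t z"] by simp
  finally have "ennreal \<bar>r z\<bar> \<le> S z" .
  then show ?thesis by (simp add: less_eq_ennreal.rep_eq)
qed

lemma vbound: assumes z: "z \<in> space Zm"
  shows "\<bar>vstar M F Z \<beta> r c z\<bar> \<le> enn2ereal (S z)"
proof (rule ereal_abs_leI)
  show "vstar M F Z \<beta> r c z \<le> enn2ereal (S z)"
    unfolding vstar_def by (rule SUP_least) (rule eexp_le[OF z])
  have "ereal (r z) \<le> vstar M F Z \<beta> r c z"
    unfolding vstar_def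
    by (rule SUP_upper2[of "\<lambda>_. 0"]) (use stopping_time_const eexp0[OF z] in auto)
  then show "- vstar M F Z \<beta> r c z \<le> enn2ereal (S z)"
    using r_le_S[OF z] by (cases "vstar M F Z \<beta> r c z"; cases "S z") (auto simp: ereal_uminus_le_reorder)
qed


definition "Ir t z = (\<integral>\<^sup>+\<omega>. ennreal \<bar>r (Z t \<omega>)\<bar> \<partial>M z)"
definition "Ic t z = (\<integral>\<^sup>+\<omega>. ennreal \<bar>c (Z t \<omega>)\<bar> \<partial>M z)"

lemma I_split: assumes z: "z \<in> space Zm" shows "I t z = Ir t z + Ic t z"
proof -
  have rm: "(\<lambda>\<omega>. ennreal \<bar>r (Z t \<omega>)\<bar>) \<in> borel_measurable (M z)"
    using Zmeas[OF z, of t] r_meas by measurable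
  have cm: "(\<lambda>\<omega>. ennreal \<bar>c (Z t \<omega>)\<bar>) \<in> borel_measurable (M z)"
    using Zmeas[OF z, of t] c_meas by measurable
  show ?thesis unfolding I_def Ir_def Ic_def
    by (simp add: nn_integral_add[OF rm cm, symmetric] ennreal_plus)
qed

lemma In_le: assumes z: "z \<in> space Zm" shows "I n z \<le> ennreal (2 * g z)"
proof -
  have "Ir n z \<le> ennreal (g z)" unfolding Ir_def
    using EZ[OF z, of "\<lambda>x. ennreal \<bar>r x\<bar>" n] A_r[OF z] r_meas by simp
  moreover have "Ic n z \<le> ennreal (g z)" unfolding Ic_def
    using EZ[OF z, of "\<lambda>x. ennreal \<bar>c x\<bar>" n] A_c[OF z] c_meas by simp
  ultimately have "I n z \<le> ennreal (g z) + ennreal (g z)" using I_split[OF z] by (simp add: add_mono)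
  also have "\<dots> = ennreal (2 * g z)" using g_nonneg[OF z] by (simp add: ennreal_plus[symmetric] del: ennreal_plus)
  finally show ?thesis .
qed

lemma space_Pz: "z \<in> space Zm \<Longrightarrow> space (P z) = space Zm" "z \<in> space Zm \<Longrightarrow> sets (P z) = sets Zm"
  "z \<in> space Zm \<Longrightarrow> prob_space (P z)"
  using kpow_sets[OF P_kernel, of z 1] kpow_one[OF P_kernel] by auto

lemma eint_bound: assumes z: "z \<in> space Zm"
  shows "\<bar>eint (P z) (vstar M F Z \<beta> r c)\<bar> \<le> enn2ereal (\<integral>\<^sup>+x. S x \<partial>P z)"
  unfolding eint_def
proof (rule abs_diff_enn)
  show "(\<integral>\<^sup>+x. e2ennreal (vstar M F Z \<beta> r c x) \<partial>P z) \<le> (\<integral>\<^sup>+x. S x \<partial>P z)"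
  proof (rule nn_integral_mono)
    fix x assume "x \<in> space (P z)"
    then have x: "x \<in> space Zm" using space_Pz[OF z] by simp
    have "vstar M F Z \<beta> r c x \<le> enn2ereal (S x)" using ereal_le_abs(1) vbound[OF x] by (rule order.trans)
    from e2ennreal_mono[OF this] show "e2ennreal (vstar M F Z \<beta> r c x) \<le> S x" by simp
  qed
  show "(\<integral>\<^sup>+x. e2ennreal (- vstar M F Z \<beta> r c x) \<partial>P z) \<le> (\<integral>\<^sup>+x. S x \<partial>P z)"
  proof (rule nn_integral_mono)
    fix x assume "x \<in> space (P z)"
    then have x: "x \<in> space Zm" using space_Pz[OF z] by simp
    have "- vstar M F Z \<beta> r c x \<le> enn2ereal (S x)" using ereal_le_abs(2) vbound[OF x] by (rule order.trans)
    from e2ennreal_mono[OF this] show "e2ennreal (- vstar M F Z \<beta> r c x) \<le> S x" by simp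
  qed
qed

lemma T_bound: assumes z: "z \<in> space Zm"
  shows "(\<integral>\<^sup>+x. S x \<partial>P z) \<le> (\<Sum>t<n. ennreal (\<beta> ^ t) * I (Suc t) z) + ennreal (a1 * (m * g z + d) + a2)"
proof -
  let ?h = "\<lambda>x. ennreal (\<bar>r x\<bar> + \<bar>c x\<bar>)"
  have km: "(\<lambda>x. \<integral>\<^sup>+y. ?h y \<partial>kpow Zm P t x) \<in> borel_measurable (P z)" for t
  proof -
    have "(\<lambda>x. \<integral>\<^sup>+y. ?h y \<partial>kpow Zm P t x) \<in> borel_measurable Zm"
      using measurable_prob_algebraD[OF kpow_meas[OF P_kernel, of t]] hmeas by measurable
    then show ?thesis by (simp add: measurable_cong_sets[OF space_Pz(2)[OF z] refl])
  qed
  have gm: "(\<lambda>x. ennreal (g x)) \<in> borel_measurable (P z)"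
    using g_meas by (simp add: measurable_cong_sets[OF space_Pz(2)[OF z] refl])
  interpret PZ: prob_space "P z" using space_Pz(3)[OF z] .
  have "(\<integral>\<^sup>+x. S x \<partial>P z) \<le> (\<integral>\<^sup>+x. Sfin x + ennreal (a1 * g x + a2) \<partial>P z)"
    by (rule nn_integral_mono) (use Sbound space_Pz(1)[OF z] in auto)
  also have "\<dots> = (\<integral>\<^sup>+x. (\<Sum>t<n. ennreal (\<beta> ^ t) * (\<integral>\<^sup>+y. ?h y \<partial>kpow Zm P t x))
        + (ennreal a1 * ennreal (g x) + ennreal a2) \<partial>P z)"
  proof (rule nn_integral_cong)
    fix x assume "x \<in> space (P z)"
    then have x: "x \<in> space Zm" using space_Pz[OF z] by simp
    have "ennreal (a1 * g x + a2) = ennreal a1 * ennreal (g x) + ennreal a2"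
      using rho_props(6,7) g_nonneg[OF x] by (subst ennreal_plus) (auto simp: ennreal_mult)
    then show "Sfin x + ennreal (a1 * g x + a2) = (\<Sum>t<n. ennreal (\<beta> ^ t) * (\<integral>\<^sup>+y. ?h y \<partial>kpow Zm P t x))
        + (ennreal a1 * ennreal (g x) + ennreal a2)"
      unfolding Sfin_def using I_kpow[OF x] by simp
  qed
  also have "\<dots> = (\<Sum>t<n. ennreal (\<beta> ^ t) * (\<integral>\<^sup>+x. (\<integral>\<^sup>+y. ?h y \<partial>kpow Zm P t x) \<partial>P z))
        + (ennreal a1 * (\<integral>\<^sup>+x. ennreal (g x) \<partial>P z) + ennreal a2)"
    using km gm PZ.emeasure_space_1
    by (simp add: nn_integral_add nn_integral_sum nn_integral_cmult)
  also have "\<dots> = (\<Sum>t<n. ennreal (\<beta> ^ t) * I (Suc t) z)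
        + (ennreal a1 * (\<integral>\<^sup>+x. ennreal (g x) \<partial>P z) + ennreal a2)"
  proof -
    have "(\<integral>\<^sup>+x. (\<integral>\<^sup>+y. ?h y \<partial>kpow Zm P t x) \<partial>P z) = I (Suc t) z" for t
      using kpow_integral[OF P_kernel z hmeas, of t 1] kpow_one[OF P_kernel z] I_kpow[OF z, of "Suc t"] by simp
    then show ?thesis by simp
  qed
  also have "\<dots> \<le> (\<Sum>t<n. ennreal (\<beta> ^ t) * I (Suc t) z)
        + (ennreal a1 * ennreal (m * g z + d) + ennreal a2)"
    using A_g[OF z] by (intro add_left_mono add_right_mono mult_left_mono) auto
  also have "ennreal a1 * ennreal (m * g z + d) + ennreal a2 = ennreal (a1 * (m * g z + d) + a2)"
    using rho_props(6,7) g_nonneg[OF z] m_nonneg d_nonneg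
    by (subst ennreal_plus) (auto simp: ennreal_mult)
  finally show ?thesis .
qed


lemma fin_real: assumes "0 \<le> gz" "x \<le> 2 * gz"
  shows "x + \<beta> * (a1 * (m * gz + d) + a2) \<le> a1 * gz + a2"
proof -
  have h1: "2 * gz \<le> a1 * (1 - \<beta> * m) * gz" using rho_props(8) assms(1) by (rule mult_right_mono)
  have e1: "\<beta> * (a1 * (m * gz + d) + a2) = \<beta> * a1 * m * gz + \<beta> * (a1 * d + a2)" by (simp add: algebra_simps)
  have e2: "a1 * (1 - \<beta> * m) * gz = a1 * gz - \<beta> * a1 * m * gz" by (simp add: algebra_simps)
  show ?thesis using h1 e1 e2 rho_props(9) assms(2) by linarith
qed

definition "TE z = (\<Sum>t\<in>{1..<n}. ennreal (\<beta> ^ t) * Ir t z) + (\<Sum>t<n. ennreal (\<beta> ^ t) * Ic t z) + ennreal (a1 * g z + a2)"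

lemma psi_final: assumes z: "z \<in> space Zm"
  shows "ennreal \<bar>c z\<bar> + ennreal \<beta> * ((\<Sum>t<n. ennreal (\<beta> ^ t) * I (Suc t) z) + ennreal (a1 * (m * g z + d) + a2)) \<le> TE z"
proof (cases n)
  case 0
  have cz: "\<bar>c z\<bar> \<le> g z"
    using A_c[OF z] 0 z c_meas g_nonneg[OF z] by (simp add: nn_integral_return)
  have Q0: "0 \<le> a1 * (m * g z + d) + a2" using rho_props(6,7) g_nonneg[OF z] m_nonneg d_nonneg by simp
  have "ennreal \<bar>c z\<bar> + ennreal \<beta> * ennreal (a1 * (m * g z + d) + a2) = ennreal (\<bar>c z\<bar> + \<beta> * (a1 * (m * g z + d) + a2))"
    using Q0 beta by (simp add: ennreal_mult[symmetric] ennreal_plus[symmetric] del: ennreal_plus)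
  also have "\<dots> \<le> ennreal (a1 * g z + a2)"
    by (rule ennreal_leI, rule fin_real) (use g_nonneg[OF z] cz in auto)
  finally show ?thesis using 0 unfolding TE_def by simp
next
  case (Suc k)
  let ?u = "\<lambda>t. ennreal (\<beta> ^ t) * Ir t z" and ?w = "\<lambda>t. ennreal (\<beta> ^ t) * Ic t z"
  let ?Q = "a1 * (m * g z + d) + a2"
  have Q0: "0 \<le> ?Q" using rho_props(6,7) g_nonneg[OF z] m_nonneg d_nonneg by simp
  have uw: "ennreal (\<beta> ^ t) * I t z = ?u t + ?w t" for t
    using I_split[OF z] by (simp add: distrib_left)
  have shift: "ennreal \<beta> * (ennreal (\<beta> ^ t) * I (Suc t) z) = ?u (Suc t) + ?w (Suc t)" for t
    using beta uw[of "Suc t"] by (simp add: ennreal_mult mult.assoc)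
  have w0: "?w 0 = ennreal \<bar>c z\<bar>"
    unfolding Ic_def using int_Z0[OF z, of "\<lambda>x. \<bar>c x\<bar>"] by simp
  have "ennreal \<beta> * ((\<Sum>t<n. ennreal (\<beta> ^ t) * I (Suc t) z) + ennreal ?Q)
      = (\<Sum>t<n. ?u (Suc t) + ?w (Suc t)) + ennreal (\<beta> * ?Q)"
  proof -
    have e1: "ennreal \<beta> * ennreal ?Q = ennreal (\<beta> * ?Q)"
      by (rule ennreal_mult[symmetric]) (use beta Q0 in auto)
    have e2: "ennreal \<beta> * (\<Sum>t<n. ennreal (\<beta> ^ t) * I (Suc t) z) = (\<Sum>t<n. ?u (Suc t) + ?w (Suc t))"
      by (simp only: sum_distrib_left shift)
    show ?thesis
      unfolding distrib_left[of "ennreal \<beta>" "\<Sum>t<n. ennreal (\<beta> ^ t) * I (Suc t) z" "ennreal ?Q"] e1 e2 ..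
  qed
  also have "\<dots> = (\<Sum>t<k. ?u (Suc t)) + (\<Sum>t<k. ?w (Suc t)) + (?u n + ?w n + ennreal (\<beta> * ?Q))"
    using Suc by (simp add: sum.distrib ac_simps)
  finally have L: "ennreal \<bar>c z\<bar> + ennreal \<beta> * ((\<Sum>t<n. ennreal (\<beta> ^ t) * I (Suc t) z) + ennreal ?Q)
      = (\<Sum>t<k. ?u (Suc t)) + (?w 0 + (\<Sum>t<k. ?w (Suc t))) + (?u n + ?w n + ennreal (\<beta> * ?Q))"
    using w0 by (simp add: ac_simps)
  have T: "TE z = (\<Sum>t<k. ?u (Suc t)) + (?w 0 + (\<Sum>t<k. ?w (Suc t))) + ennreal (a1 * g z + a2)"
  proof -
    have "(\<Sum>t\<in>{1..<n}. ?u t) = (\<Sum>t<k. ?u (Suc t))"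
      using Suc sum.shift_bounds_Suc_ivl[of ?u 0 k] by (simp add: atLeast0LessThan)
    moreover have "(\<Sum>t<n. ?w t) = ?w 0 + (\<Sum>t<k. ?w (Suc t))"
      using Suc sum.lessThan_Suc_shift[of ?w k] by simp
    ultimately show ?thesis unfolding TE_def by simp
  qed
  have "?u n + ?w n + ennreal (\<beta> * ?Q) \<le> ennreal (\<beta> ^ n) * ennreal (2 * g z) + ennreal (\<beta> * ?Q)"
  proof -
    have "ennreal (\<beta> ^ n) * I n z \<le> ennreal (\<beta> ^ n) * ennreal (2 * g z)"
      using In_le[OF z] by (rule mult_left_mono) simp
    then show ?thesis unfolding uw[of n, symmetric] by (rule add_right_mono)
  qed
  also have "\<dots> = ennreal (\<beta> ^ n * (2 * g z) + \<beta> * ?Q)"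
    using beta Q0 g_nonneg[OF z] by (simp add: ennreal_mult[symmetric] ennreal_plus[symmetric] del: ennreal_plus)
  also have "\<dots> \<le> ennreal (a1 * g z + a2)"
  proof (rule ennreal_leI, rule fin_real)
    show "0 \<le> g z" using g_nonneg[OF z] .
    have "\<beta> ^ n \<le> 1" using beta by (simp add: power_le_one)
    then have "\<beta> ^ n * (2 * g z) \<le> 1 * (2 * g z)" using g_nonneg[OF z] by (intro mult_right_mono) auto
    then show "\<beta> ^ n * (2 * g z) \<le> 2 * g z" by simp
  qed
  finally have R: "?u n + ?w n + ennreal (\<beta> * ?Q) \<le> ennreal (a1 * g z + a2)" .
  show ?thesis unfolding L T by (rule add_left_mono[OF R])
qed

end


theorem lemma1:
  fixes Zm :: "'z measure" and P :: "'z \<Rightarrow> 'z measure"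
    and Om :: "'w measure" and M :: "'z \<Rightarrow> 'w measure" and F :: "nat \<Rightarrow> 'w measure"
    and Z :: "nat \<Rightarrow> 'w \<Rightarrow> 'z"
    and \<beta> :: real and r c g :: "'z \<Rightarrow> real" and n :: nat and m d :: real
  assumes P_kernel: "P \<in> Zm \<rightarrow>\<^sub>M prob_algebra Zm"
    and M_prob: "\<And>z. z \<in> space Zm \<Longrightarrow> prob_space (M z)"
    and M_sets: "\<And>z. z \<in> space Zm \<Longrightarrow> sets (M z) = sets Om"
    and filt: "filtration (space Om) F"
    and F_sub: "\<And>t. sets (F t) \<subseteq> sets Om"
    and adapted: "\<And>t. Z t \<in> F t \<rightarrow>\<^sub>M Zm"
    and start: "\<And>z. z \<in> space Zm \<Longrightarrow> (AE \<omega> in M z. Z 0 \<omega> = z)"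
    and markov: "\<And>z t A B. z \<in> space Zm \<Longrightarrow> A \<in> sets (F t) \<Longrightarrow> B \<in> sets Zm \<Longrightarrow>
        emeasure (M z) (A \<inter> (Z (Suc t) -` B \<inter> space Om))
          = (\<integral>\<^sup>+ \<omega>. emeasure (P (Z t \<omega>)) B * indicator A \<omega> \<partial>M z)"
    and beta: "0 < \<beta>" "\<beta> < 1"
    and r_meas: "r \<in> borel_measurable Zm" and c_meas: "c \<in> borel_measurable Zm"
    and g_meas: "g \<in> borel_measurable Zm" and g_nonneg: "\<And>z. z \<in> space Zm \<Longrightarrow> 0 \<le> g z"
    and m_nonneg: "0 \<le> m" and d_nonneg: "0 \<le> d" and bm: "\<beta> * m < 1"
    and A_r: "\<And>z. z \<in> space Zm \<Longrightarrow> (\<integral>\<^sup>+ z'. ennreal \<bar>r z'\<bar> \<partial>kpow Zm P n z) \<le> ennreal (g z)"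
    and A_c: "\<And>z. z \<in> space Zm \<Longrightarrow> (\<integral>\<^sup>+ z'. ennreal \<bar>c z'\<bar> \<partial>kpow Zm P n z) \<le> ennreal (g z)"
    and A_g: "\<And>z. z \<in> space Zm \<Longrightarrow> (\<integral>\<^sup>+ z'. ennreal (g z') \<partial>P z) \<le> ennreal (m * g z + d)"
  shows "\<exists>a1 a2. 0 \<le> a1 \<and> 0 \<le> a2 \<and> (\<forall>z \<in> space Zm.
      \<bar>vstar M F Z \<beta> r c z\<bar> \<le>
        (\<Sum>t<n. ereal (\<beta> ^ t) * enn2ereal (\<integral>\<^sup>+ \<omega>. ennreal (\<bar>r (Z t \<omega>)\<bar> + \<bar>c (Z t \<omega>)\<bar>) \<partial>M z))
        + ereal (a1 * g z + a2)
    \<and> \<bar>psistar P M F Z \<beta> r c z\<bar> \<le>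
        (\<Sum>t\<in>{1..<n}. ereal (\<beta> ^ t) * enn2ereal (\<integral>\<^sup>+ \<omega>. ennreal \<bar>r (Z t \<omega>)\<bar> \<partial>M z))
        + (\<Sum>t<n. ereal (\<beta> ^ t) * enn2ereal (\<integral>\<^sup>+ \<omega>. ennreal \<bar>c (Z t \<omega>)\<bar> \<partial>M z))
        + ereal (a1 * g z + a2))"
  proof -
  have s1: "setting Zm P Om M F Z"
    by (rule setting.intro) (fact assms)+
  have s2: "setting2_axioms Zm P \<beta> r c g n m d"
    by (rule setting2_axioms.intro) (fact assms)+
  interpret S2: setting2 Zm P Om M F Z \<beta> r c g n m d
    by (rule setting2.intro[OF s1 s2])
  show ?thesis
  proof (intro exI conjI ballI)
    show "0 \<le> S2.a1" "0 \<le> S2.a2" using S2.rho_props(6,7) by auto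
  next
    fix z assume z: "z \<in> space Zm"
    have "\<bar>vstar M F Z \<beta> r c z\<bar> \<le> enn2ereal (S2.S z)" by (rule S2.vbound[OF z])
    also have "\<dots> \<le> enn2ereal (S2.Sfin z + ennreal (S2.a1 * g z + S2.a2))"
      using S2.Sbound[OF z] by (simp add: less_eq_ennreal.rep_eq)
    also have "\<dots> = (\<Sum>t<n. ereal (\<beta> ^ t) * enn2ereal (\<integral>\<^sup>+ \<omega>. ennreal (\<bar>r (Z t \<omega>)\<bar> + \<bar>c (Z t \<omega>)\<bar>) \<partial>M z))
        + ereal (S2.a1 * g z + S2.a2)"
      using S2.rho_props(6,7) g_nonneg[OF z] beta
      by (simp add: plus_ennreal.rep_eq S2.Sfin_def S2.I_def conv_sum)
    finally show "\<bar>vstar M F Z \<beta> r c z\<bar> \<le> (\<Sum>t<n. ereal (\<beta> ^ t) * enn2ereal (\<integral>\<^sup>+ \<omega>. ennreal (\<bar>r (Z t \<omega>)\<bar> + \<bar>c (Z t \<omega>)\<bar>) \<partial>M z))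
        + ereal (S2.a1 * g z + S2.a2)" .
  next
    fix z assume z: "z \<in> space Zm"
    let ?B = "(\<Sum>t<n. ennreal (\<beta> ^ t) * S2.I (Suc t) z) + ennreal (S2.a1 * (m * g z + d) + S2.a2)"
    have "\<bar>psistar P M F Z \<beta> r c z\<bar> \<le> enn2ereal (ennreal \<bar>c z\<bar> + ennreal \<beta> * (\<integral>\<^sup>+x. S2.S x \<partial>P z))"
      unfolding psistar_def by (rule ereal_psi[OF beta(1) S2.eint_bound[OF z]])
    also have "\<dots> \<le> enn2ereal (ennreal \<bar>c z\<bar> + ennreal \<beta> * ?B)"
      using S2.T_bound[OF z] by (simp add: less_eq_ennreal.rep_eq[symmetric] add_left_mono mult_left_mono)
    also have "\<dots> \<le> enn2ereal (S2.TE z)"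
      using S2.psi_final[OF z] by (simp add: less_eq_ennreal.rep_eq[symmetric])
    also have "\<dots> = (\<Sum>t\<in>{1..<n}. ereal (\<beta> ^ t) * enn2ereal (\<integral>\<^sup>+ \<omega>. ennreal \<bar>r (Z t \<omega>)\<bar> \<partial>M z))
        + (\<Sum>t<n. ereal (\<beta> ^ t) * enn2ereal (\<integral>\<^sup>+ \<omega>. ennreal \<bar>c (Z t \<omega>)\<bar> \<partial>M z))
        + ereal (S2.a1 * g z + S2.a2)"
      using S2.rho_props(6,7) g_nonneg[OF z] beta
      by (simp add: plus_ennreal.rep_eq S2.TE_def S2.Ir_def S2.Ic_def conv_sum)
    finally show "\<bar>psistar P M F Z \<beta> r c z\<bar> \<le> (\<Sum>t\<in>{1..<n}. ereal (\<beta> ^ t) * enn2ereal (\<integral>\<^sup>+ \<omega>. ennreal \<bar>r (Z t \<omega>)\<bar> \<partial>M z))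
        + (\<Sum>t<n. ereal (\<beta> ^ t) * enn2ereal (\<integral>\<^sup>+ \<omega>. ennreal \<bar>c (Z t \<omega>)\<bar> \<partial>M z))
        + ereal (S2.a1 * g z + S2.a2)" .
  qed
qed

end
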